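(* SD-EFX allocations need not exist, even for additive valuations: consider $m=4$ items $\{1,2,3,4\}$ and $n=2$ agents with identical additive valuations $v(\{1\})=4$, $v(\{2\})=1+\epsilon$, $v(\{3\})=1$, $v(\{4\})=1-\epsilon$ for a small $\epsilon\in(0,1)$, so that both agents have the ordering $\pi=1\succ 2\succ 3\succ 4$. Then no allocation of the four items is SD-EFX with respect to $\pi_1=\pi_2=\pi$.
   Context: For an ordering $\pi$ (best to worst), $A\succeq^{\mathrm{sd}}_\pi B$ iff $|A|\ge|B|$ and for every $k\le|B|$ the $k$-th best item of $A$ under $\pi$ is ranked weakly above the $k$-th best item of $B$. An allocation $(A_1,A_2)$ is a partition of all items; it is SD-EFX if for all agents $i,j$ with $A_j\neq\emptyset$ and all $g\in A_j$, $A_i\succeq^{\mathrm{sd}}_{\pi_i}A_j\setminus\{g\}$. *)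

theory Defs
  imports Complex_Main
begin

text \<open>An ordering \<pi> of the items is a distinct list, best item first.
  The rank of an item is its position in the list (smaller = better).\<close>

definition rank :: "'a list \<Rightarrow> 'a \<Rightarrow> nat" where
  "rank \<pi> x = (LEAST i. i < length \<pi> \<and> \<pi> ! i = x)"

text \<open>The items of A listed from best to worst under \<pi>; its k-th entry
  (0-based) is the (k+1)-th best item of A.\<close>

definition ordered_items :: "'a list \<Rightarrow> 'a set \<Rightarrow> 'a list" where
  "ordered_items \<pi> A = filter (\<lambda>x. x \<in> A) \<pi>"

definition sd_geq :: "'a list \<Rightarrow> 'a set \<Rightarrow> 'a set \<Rightarrow> bool" where
  "sd_geq \<pi> A B \<longleftrightarrow> card A \<ge> card B \<and>
     (\<forall>k < card B. rank \<pi> (ordered_items \<pi> A ! k) \<le> rank \<pi> (ordered_items \<pi> B ! k))"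

definition is_allocation :: "'a set \<Rightarrow> 'b set \<Rightarrow> ('b \<Rightarrow> 'a set) \<Rightarrow> bool" where
  "is_allocation M N A \<longleftrightarrow> (\<Union>i\<in>N. A i) = M \<and>
     (\<forall>i\<in>N. \<forall>j\<in>N. i \<noteq> j \<longrightarrow> A i \<inter> A j = {})"

definition sd_efx :: "'a set \<Rightarrow> 'b set \<Rightarrow> ('b \<Rightarrow> 'a list) \<Rightarrow> ('b \<Rightarrow> 'a set) \<Rightarrow> bool" where
  "sd_efx M N \<pi> A \<longleftrightarrow> is_allocation M N A \<and>
     (\<forall>i\<in>N. \<forall>j\<in>N. A j \<noteq> {} \<longrightarrow> (\<forall>g\<in>A j. sd_geq (\<pi> i) (A i) (A j - {g})))"

end

theory Submission
  imports Defs
begin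


lemma rk1: "rank [1,2,3,4::nat] 1 = 0" "rank [1,2,3,4::nat] 2 = 1"
  "rank [1,2,3,4::nat] 3 = 2" "rank [1,2,3,4::nat] 4 = 3"
  unfolding rank_def by (rule Least_equality; simp add: nth_Cons' split: if_splits)+

lemma oi_len: "finite B \<Longrightarrow> B \<subseteq> set \<pi> \<Longrightarrow> distinct \<pi> \<Longrightarrow> length (ordered_items \<pi> B) = card B"
  unfolding ordered_items_def
  by (simp add: distinct_length_filter Int_absorb2 Int_commute[of "{x. x \<in> B}"] Collect_mem_eq)

lemma key:
  fixes X Y :: "nat set"
  assumes U: "X \<union> Y = {1,2,3,4}" and D: "X \<inter> Y = {}" and one: "1 \<in> X"
    and e1: "\<forall>g\<in>Y. sd_geq [1,2,3,4] X (Y - {g})"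
    and e2: "\<forall>g\<in>X. sd_geq [1,2,3,4] Y (X - {g})"
  shows False
proof (cases "X = {1}")
  case True
  then have "Y = {1,2,3,4} - {1}" using U D by blast
  then have Y: "Y = {2,3,4}" by auto
  have "sd_geq [1,2,3,4] X (Y - {2})" using e1 Y by blast
  moreover have "Y - {2} = {3,4::nat}" using Y by auto
  ultimately have "sd_geq [1,2,3,4] {1} {3,4::nat}" using True by simp
  then show False by (simp add: sd_geq_def)
next
  case False
  then obtain x where x: "x \<in> X" "x \<noteq> 1" using one by blast
  have fX: "finite (X - {x})" proof - have "finite (X \<union> Y)" by (simp add: U) then show ?thesis by simp qed
  have "1 \<in> X - {x}" using one x by auto
  then have c1: "card (X - {x}) \<ge> 1" using fX by (simp add: Suc_le_eq card_gt_0_iff) blast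
  have s: "sd_geq [1,2,3,4] Y (X - {x})" using e2 x by blast
  then have cY: "card Y \<ge> 1" using c1 by (simp add: sd_geq_def)
  have r: "rank [1,2,3,4] (ordered_items [1,2,3,4] Y ! 0) \<le> rank [1,2,3,4] (ordered_items [1,2,3,4] (X - {x}) ! 0)"
    using s c1 unfolding sd_geq_def by auto
  have o1: "ordered_items [1,2,3,4] (X - {x}) ! 0 = 1"
    unfolding ordered_items_def using \<open>1 \<in> X - {x}\<close> by simp
  have fY: "finite Y" proof - have "finite (X \<union> Y)" by (simp add: U) then show ?thesis by simp qed
  have "length (ordered_items [1,2,3,4::nat] Y) = card Y"
    by (rule oi_len) (use fY U in auto)
  then have "0 < length (ordered_items [1,2,3,4::nat] Y)" using cY by simp
  then have "ordered_items [1,2,3,4] Y ! 0 \<in> set (ordered_items [1,2,3,4::nat] Y)" by (rule nth_mem)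
  then have "ordered_items [1,2,3,4] Y ! 0 \<in> Y" unfolding ordered_items_def by (simp only: set_filter) blast
  moreover have "Y \<subseteq> {1,2,3,4} - {1}" using U D one by blast
  ultimately have "ordered_items [1,2,3,4] Y ! 0 \<in> {2,3,4}" by auto
  then show False using r rk1 o1 by auto
qed


theorem mainTheorem17:
  fixes \<epsilon> :: real and v :: "nat set \<Rightarrow> real"
  assumes "0 < \<epsilon>" and "\<epsilon> < 1"
    and "\<And>S. S \<subseteq> {1,2,3,4} \<Longrightarrow> v S = (\<Sum>x\<in>S. [4, 1 + \<epsilon>, 1, 1 - \<epsilon>] ! (x - 1))"
  shows "\<not> (\<exists>A :: nat \<Rightarrow> nat set.
            sd_efx {1,2,3,4::nat} {1,2::nat} (\<lambda>_. [1,2,3,4]) A)"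
proof
  assume "\<exists>A :: nat \<Rightarrow> nat set. sd_efx {1,2,3,4::nat} {1,2::nat} (\<lambda>_. [1,2,3,4]) A"
  then obtain A :: "nat \<Rightarrow> nat set" where h: "sd_efx {1,2,3,4::nat} {1,2::nat} (\<lambda>_. [1,2,3,4]) A" by blast
  have al: "A 1 \<union> A 2 = {1,2,3,4}" "A 1 \<inter> A 2 = {}"
    using h unfolding sd_efx_def is_allocation_def by auto
  have ef: "\<forall>i\<in>{1,2::nat}. \<forall>j\<in>{1,2::nat}. A j \<noteq> {} \<longrightarrow> (\<forall>g\<in>A j. sd_geq [1,2,3,4] (A i) (A j - {g}))"
    using h unfolding sd_efx_def by auto
  then have e12: "\<forall>g\<in>A 2. sd_geq [1,2,3,4] (A 1) (A 2 - {g})"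
    and e21: "\<forall>g\<in>A 1. sd_geq [1,2,3,4] (A 2) (A 1 - {g})" by auto
  show False
  proof (cases "1 \<in> A 1")
    case True
    show False by (rule key[OF al True e12 e21])
  next
    case False
    then have "1 \<in> A 2" using al by auto
    show False by (rule key[of "A 2" "A 1"]) (use al \<open>1 \<in> A 2\<close> e12 e21 in auto)
  qed
qed

end
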